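(* Let $M$ be a Hausdorff space, $C_b(M)$ the $C^\ast$-algebra of bounded continuous functions $M\to\mathbb{C}$, and $C^{pt}(\mathcal{Q}(\mathcal{T}(M)))$ the $C^\ast$-subalgebra of $C(\mathcal{Q}(\mathcal{T}(M)))$ consisting of all continuous $\psi:\mathcal{Q}(\mathcal{T}(M))\to\mathbb{C}$ that are constant on each fibre of $pt:\mathcal{Q}^{pt}(\mathcal{T}(M))\to M$. Then the map \[ f_\ast:C_b(M)\to C^{pt}(\mathcal{Q}(\mathcal{T}(M))),\qquad \varphi\mapsto f_{E^{\varphi}}:=f_{E^{\mathrm{Re}\,\varphi}}+i\,f_{E^{\mathrm{Im}\,\varphi}}, \] is a $\ast$-isomorphism of $C^\ast$-algebras.
   Context: $\mathcal{T}(M)$ is the lattice of open subsets of $M$. A quasipoint of $\mathcal{T}(M)$ is a maximal dual ideal (maximal nonempty family of open sets not containing $\emptyset$, upward closed and closed under finite intersections); $\mathcal{Q}(\mathcal{T}(M))$ is the set of quasipoints with topology having base $\{\mathfrak{B}\mid U\in\mathfrak{B}\}$, $U\in\mathcal{T}(M)$ (a compact space). $\mathfrak{B}$ is over $x\in M$ if $x\in\bigcap_{U\in\mathfrak{B}}\overline{U}$ (at most one such $x$ since $M$ is Hausdorff); $\mathcal{Q}^{pt}(\mathcal{T}(M))$ is the set of quasipoints over some point, and $pt(\mathfrak{B})=x$ if $\mathfrak{B}$ is over $x$. For a bounded continuous $\psi:M\to\mathbb{R}$, $E^\psi_\lambda:=\mathrm{int}\,\psi^{-1}(]-\infty,\lambda])$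 and $f_{E^\psi}(\mathfrak{B}):=\inf\{\lambda\in\mathbb{R}\mid E^\psi_\lambda\in\mathfrak{B}\}$. $E^\varphi$ denotes the complex spectral family $E^\varphi_{\lambda,\mu}=E^{\mathrm{Re}\,\varphi}_\lambda\cap E^{\mathrm{Im}\,\varphi}_\mu$. *)

theory Defs
  imports "HOL-Analysis.Analysis"
begin

definition dual_ideal :: "'a::topological_space set set \<Rightarrow> bool" where
  "dual_ideal \<B> \<longleftrightarrow> \<B> \<noteq> {} \<and> (\<forall>U\<in>\<B>. open U) \<and> {} \<notin> \<B> \<and>
     (\<forall>U V. U \<in> \<B> \<longrightarrow> open V \<longrightarrow> U \<subseteq> V \<longrightarrow> V \<in> \<B>) \<and>
     (\<forall>U V. U \<in> \<B> \<longrightarrow> V \<in> \<B> \<longrightarrow> U \<inter> V \<in> \<B>)"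

definition quasipoint :: "'a::topological_space set set \<Rightarrow> bool" where
  "quasipoint \<B> \<longleftrightarrow> dual_ideal \<B> \<and> (\<forall>\<C>. dual_ideal \<C> \<and> \<B> \<subseteq> \<C> \<longrightarrow> \<C> = \<B>)"

definition Q_top :: "'a::topological_space set set topology" where
  "Q_top = topology_generated_by {{\<B>. quasipoint \<B> \<and> U \<in> \<B>} | U. open U}"

definition over :: "'a::topological_space set set \<Rightarrow> 'a \<Rightarrow> bool" where
  "over \<B> x \<longleftrightarrow> quasipoint \<B> \<and> x \<in> (\<Inter>U\<in>\<B>. closure U)"

definition Cb :: "('a::topological_space \<Rightarrow> complex) set" where
  "Cb = {\<phi>. continuous_on UNIV \<phi> \<and> bounded (range \<phi>)}"

text \<open>C^pt(Q(T(M))): continuous functions on Q(T(M)) constant on the fibres of pt;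
  represented as functions that vanish outside the set of quasipoints.\<close>
definition Cpt :: "('a::topological_space set set \<Rightarrow> complex) set" where
  "Cpt = {\<psi>. (\<forall>\<B>. \<not> quasipoint \<B> \<longrightarrow> \<psi> \<B> = 0) \<and>
              continuous_map Q_top euclidean \<psi> \<and>
              (\<forall>x \<B>1 \<B>2. over \<B>1 x \<and> over \<B>2 x \<longrightarrow> \<psi> \<B>1 = \<psi> \<B>2)}"

definition spec_fam :: "('a::topological_space \<Rightarrow> real) \<Rightarrow> real \<Rightarrow> 'a set" where
  "spec_fam \<psi> t = interior (\<psi> -` {..t})"

definition f_E :: "('a::topological_space \<Rightarrow> real) \<Rightarrow> 'a set set \<Rightarrow> real" where
  "f_E \<psi> \<B> = Inf {t. spec_fam \<psi> t \<in> \<B>}"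

definition fstar :: "('a::topological_space \<Rightarrow> complex) \<Rightarrow> 'a set set \<Rightarrow> complex" where
  "fstar \<phi> \<B> = (if quasipoint \<B> then
      complex_of_real (f_E (\<lambda>x. Re (\<phi> x)) \<B>) + \<i> * complex_of_real (f_E (\<lambda>x. Im (\<phi> x)) \<B>)
    else 0)"

end

theory Submission
  imports Defs
begin

definition FB :: "'a set set \<Rightarrow> 'a filter" where
  "FB B = (INF U\<in>B. principal U)"


lemma di_open: "dual_ideal B \<Longrightarrow> U \<in> B \<Longrightarrow> open U"
  unfolding dual_ideal_def by (elim conjE) (erule bspec)
lemma di_Int: "dual_ideal B \<Longrightarrow> U \<in> B \<Longrightarrow> V \<in> B \<Longrightarrow> U \<inter> V \<in> B"
  unfolding dual_ideal_def by meson
lemma di_up: "dual_ideal B \<Longrightarrow> U \<in> B \<Longrightarrow> open V \<Longrightarrow> U \<subseteq> V \<Longrightarrow> V \<in> B"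
  unfolding dual_ideal_def by meson
lemma di_empty: "dual_ideal B \<Longrightarrow> {} \<notin> B"
  unfolding dual_ideal_def by meson
lemma di_ne: "dual_ideal B \<Longrightarrow> B \<noteq> {}"
  unfolding dual_ideal_def by meson
lemma di_UNIV: "dual_ideal B \<Longrightarrow> UNIV \<in> B"
proof -
  assume d: "dual_ideal B"
  then obtain U where "U \<in> B" using di_ne by blast
  then show "UNIV \<in> B" using di_up[OF d _ open_UNIV] by blast
qed
lemma di_intro:
  assumes "B \<noteq> {}" "\<And>U. U \<in> B \<Longrightarrow> open U" "{} \<notin> B"
    "\<And>U V. U \<in> B \<Longrightarrow> open V \<Longrightarrow> U \<subseteq> V \<Longrightarrow> V \<in> B"
    "\<And>U V. U \<in> B \<Longrightarrow> V \<in> B \<Longrightarrow> U \<inter> V \<in> B"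
  shows "dual_ideal B"
  unfolding dual_ideal_def
  apply (intro conjI allI impI ballI)
  apply (fact assms(1))
  apply (erule assms(2))
  apply (fact assms(3))
  apply (erule (2) assms(4))
  apply (erule (1) assms(5))
  done

lemma eventually_FB:
  assumes "dual_ideal B"
  shows "eventually P (FB B) \<longleftrightarrow> (\<exists>U\<in>B. \<forall>x\<in>U. P x)"
proof -
  have ne: "B \<noteq> {}" using assms by (rule di_ne)
  have "eventually P (FB B) \<longleftrightarrow> (\<exists>b\<in>B. eventually P (principal b))"
    unfolding FB_def
  proof (rule eventually_INF_base[OF ne])
    fix a b assume "a \<in> B" "b \<in> B"
    then have "a \<inter> b \<in> B" using assms di_Int by blast
    then show "\<exists>x\<in>B. principal x \<le> inf (principal a) (principal b)" by auto
  qed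
  then show ?thesis by (simp add: eventually_principal)
qed

lemma FB_nonbot: "dual_ideal B \<Longrightarrow> FB B \<noteq> bot"
proof
  assume d: "dual_ideal B" and "FB B = bot"
  then have "eventually (\<lambda>x. False) (FB B)" by simp
  then obtain U where "U \<in> B" "\<forall>x\<in>U. False" using eventually_FB[OF d] by blast
  then have "U = {}" by auto
  with \<open>U \<in> B\<close> d di_empty show False by blast
qed

lemma qp_di: "quasipoint B \<Longrightarrow> dual_ideal B"
  unfolding quasipoint_def by blast

lemma qp_max:
  assumes q: "quasipoint B" and W: "open W" "W \<notin> B"
  shows "\<exists>V\<in>B. V \<inter> W = {}"
proof (rule ccontr)
  assume nc: "\<not> (\<exists>V\<in>B. V \<inter> W = {})"
  have d: "dual_ideal B" using q qp_di by blast
  define C where "C = {X. open X \<and> (\<exists>V\<in>B. V \<inter> W \<subseteq> X)}"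
  have "dual_ideal C"
  proof (rule di_intro)
    show "C \<noteq> {}" using di_UNIV[OF d] unfolding C_def by blast
    show "\<And>U. U \<in> C \<Longrightarrow> open U" unfolding C_def by blast
    show "{} \<notin> C" using nc unfolding C_def by blast
    show "\<And>U V. U \<in> C \<Longrightarrow> open V \<Longrightarrow> U \<subseteq> V \<Longrightarrow> V \<in> C" unfolding C_def by blast
    fix U V assume "U \<in> C" "V \<in> C"
    then obtain V1 V2 where "V1 \<in> B" "V2 \<in> B" "V1 \<inter> W \<subseteq> U" "V2 \<inter> W \<subseteq> V" "open U" "open V"
      unfolding C_def by blast
    moreover have "V1 \<inter> V2 \<in> B" using d \<open>V1 \<in> B\<close> \<open>V2 \<in> B\<close> by (rule di_Int)
    ultimately show "U \<inter> V \<in> C" unfolding C_def by blast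
  qed
  moreover have "B \<subseteq> C" using d di_open unfolding C_def by blast
  ultimately have "C = B" using q unfolding quasipoint_def by blast
  moreover have "W \<in> C" using W di_UNIV[OF d] unfolding C_def by blast
  ultimately show False using W by blast
qed

lemma qp_ext:
  assumes "dual_ideal D"
  shows "\<exists>B. quasipoint B \<and> D \<subseteq> B"
proof -
  define A where "A = {C. dual_ideal C \<and> D \<subseteq> C}"
  have "\<exists>M\<in>A. \<forall>X\<in>A. M \<subseteq> X \<longrightarrow> X = M"
  proof (rule Zorn_Lemma2, intro ballI)
    fix Ch assume ch: "Ch \<in> chains A"
    show "\<exists>U\<in>A. \<forall>X\<in>Ch. X \<subseteq> U"
    proof (cases "Ch = {}")
      case True then show ?thesis using assms unfolding A_def by blast
    next
      case False
      have sub: "Ch \<subseteq> A" and lin: "\<forall>X\<in>Ch. \<forall>Y\<in>Ch. X \<subseteq> Y \<or> Y \<subseteq> X"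
        using ch unfolding chains_def chain_subset_def by auto
      have dCh: "\<And>X. X \<in> Ch \<Longrightarrow> dual_ideal X" using sub unfolding A_def by blast
      have "dual_ideal (\<Union>Ch)"
      proof (rule di_intro)
        obtain X where "X \<in> Ch" using False by blast
        then have "UNIV \<in> X" using dCh di_UNIV by blast
        then show "\<Union>Ch \<noteq> {}" using \<open>X \<in> Ch\<close> by blast
      next
        fix U assume "U \<in> \<Union>Ch"
        then obtain X where "X \<in> Ch" "U \<in> X" by blast
        then show "open U" using dCh di_open by blast
      next
        show "{} \<notin> \<Union>Ch" using dCh di_empty by blast
      next
        fix U V assume "U \<in> \<Union>Ch" "open V" "U \<subseteq> V"
        then obtain X where "X \<in> Ch" "U \<in> X" by blast
        then have "V \<in> X" using dCh di_up \<open>open V\<close> \<open>U \<subseteq> V\<close> by blast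
        then show "V \<in> \<Union>Ch" using \<open>X \<in> Ch\<close> by blast
      next
        fix U V assume "U \<in> \<Union>Ch" "V \<in> \<Union>Ch"
        then obtain X Y where XY: "X \<in> Ch" "Y \<in> Ch" "U \<in> X" "V \<in> Y" by blast
        then have "X \<subseteq> Y \<or> Y \<subseteq> X" using lin by blast
        then show "U \<inter> V \<in> \<Union>Ch"
        proof
          assume "X \<subseteq> Y"
          then have "U \<inter> V \<in> Y" using XY dCh di_Int by blast
          then show ?thesis using XY by blast
        next
          assume "Y \<subseteq> X"
          then have "U \<inter> V \<in> X" using XY dCh di_Int by blast
          then show ?thesis using XY by blast
        qed
      qed
      moreover have "D \<subseteq> \<Union>Ch" using False sub unfolding A_def by blast
      ultimately show ?thesis unfolding A_def by blast
    qed
  qed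
  then obtain M where "M \<in> A" "\<forall>X\<in>A. M \<subseteq> X \<longrightarrow> X = M" by blast
  then have M1: "dual_ideal M" "D \<subseteq> M" and M2: "\<And>X. dual_ideal X \<Longrightarrow> D \<subseteq> X \<Longrightarrow> M \<subseteq> X \<Longrightarrow> X = M"
    unfolding A_def by auto
  have "quasipoint M" unfolding quasipoint_def
  proof (intro conjI allI impI)
    fix C assume "dual_ideal C \<and> M \<subseteq> C"
    then show "C = M" using M2 M1(2) by blast
  qed (rule M1(1))
  then show ?thesis using M1 by blast
qed


lemma lim_unique:
  fixes f :: "'a::topological_space \<Rightarrow> 'b::t2_space"
  assumes "quasipoint B" "(f \<longlongrightarrow> a) (FB B)" "(f \<longlongrightarrow> b) (FB B)"
  shows "a = b"
  using tendsto_unique[OF FB_nonbot[OF qp_di[OF assms(1)]] assms(2,3)] .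

lemma fE_lim:
  fixes \<psi> :: "'a::topological_space \<Rightarrow> real"
  assumes q: "quasipoint B" and c: "continuous_on UNIV \<psi>" and bd: "bounded (range \<psi>)"
  shows "(\<psi> \<longlongrightarrow> f_E \<psi> B) (FB B)"
proof -
  have d: "dual_ideal B" using q by (rule qp_di)
  obtain K where K: "\<And>x. norm (\<psi> x) \<le> K" using bd unfolding bounded_iff by blast
  define S where "S = {t. spec_fam \<psi> t \<in> B}"
  have "\<psi> -` {..K} = UNIV" using K by (auto simp: abs_le_iff)
  then have "spec_fam \<psi> K = UNIV" unfolding spec_fam_def by simp
  then have KS: "K \<in> S" unfolding S_def using di_UNIV[OF d] by simp
  have lowS: "t \<ge> -K" if "t \<in> S" for t
  proof (rule ccontr)
    assume "\<not> t \<ge> -K"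
    then have "\<psi> x > t" for x using K[of x] by (simp add: abs_le_iff)
    then have "\<psi> -` {..t} = {}" by (auto simp: not_le[symmetric])
    then have "spec_fam \<psi> t = {}" unfolding spec_fam_def by simp
    then show False using that di_empty[OF d] unfolding S_def by simp
  qed
  have bdd: "bdd_below S" using lowS by (meson bdd_below.I)
  have ne: "S \<noteq> {}" using KS by blast
  have specopen: "open (spec_fam \<psi> t)" for t unfolding spec_fam_def by simp
  have specsub: "x \<in> spec_fam \<psi> t \<Longrightarrow> \<psi> x \<le> t" for x t
    unfolding spec_fam_def using interior_subset by fastforce
  show ?thesis
    unfolding tendsto_iff
  proof (intro allI impI)
    fix e :: real assume e: "e > 0"
    define l where "l = f_E \<psi> B"
    have lS: "l = Inf S" unfolding l_def f_E_def S_def by simp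
    obtain t where t: "t \<in> S" "t < l + e" using cInf_lessD[OF ne, of "l + e"] e lS by auto
    define s where "s = l - e/2"
    have sS: "s \<notin> S"
    proof
      assume "s \<in> S"
      then have "l \<le> s" using cInf_lower[OF _ bdd] lS by simp
      then show False using e unfolding s_def by simp
    qed
    define W where "W = \<psi> -` {..<s}"
    have Wo: "open W" unfolding W_def by (rule open_vimage[OF open_lessThan c])
    have "W \<subseteq> spec_fam \<psi> s" unfolding spec_fam_def W_def
      by (rule interior_maximal) (auto simp: Wo[unfolded W_def])
    then have "W \<notin> B" using sS di_up[OF d _ specopen] unfolding S_def by blast
    then obtain V where V: "V \<in> B" "V \<inter> W = {}" using qp_max[OF q Wo] by blast
    have tB: "spec_fam \<psi> t \<in> B" using t unfolding S_def by simp
    have "spec_fam \<psi> t \<inter> V \<in> B" using di_Int[OF d tB V(1)] .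
    moreover have "dist (\<psi> x) l < e" if "x \<in> spec_fam \<psi> t \<inter> V" for x
    proof -
      have "\<psi> x \<le> t" using that specsub by blast
      moreover have "x \<notin> W" using that V(2) by blast
      then have "\<psi> x \<ge> s" unfolding W_def by simp
      ultimately show ?thesis using t e unfolding s_def dist_real_def by simp
    qed
    ultimately show "eventually (\<lambda>x. dist (\<psi> x) (f_E \<psi> B) < e) (FB B)"
      unfolding eventually_FB[OF d] l_def by blast
  qed
qed

lemma Cb_iff: "\<phi> \<in> Cb \<longleftrightarrow> continuous_on UNIV \<phi> \<and> (\<exists>K. \<forall>x. norm (\<phi> x) \<le> K)"
  unfolding Cb_def bounded_iff by auto

lemma fstar_lim:
  assumes "\<phi> \<in> Cb" "quasipoint B"
  shows "(\<phi> \<longlongrightarrow> fstar \<phi> B) (FB B)"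
proof -
  obtain K where K: "\<And>x. norm (\<phi> x) \<le> K" and c: "continuous_on UNIV \<phi>"
    using assms(1) unfolding Cb_iff by blast
  have bR: "bounded (range (\<lambda>x. Re (\<phi> x)))" unfolding bounded_iff
    using K abs_Re_le_cmod order_trans by (metis real_norm_def rangeE)
  have bI: "bounded (range (\<lambda>x. Im (\<phi> x)))" unfolding bounded_iff
    using K abs_Im_le_cmod order_trans by (metis real_norm_def rangeE)
  have 1: "((\<lambda>x. Re (\<phi> x)) \<longlongrightarrow> f_E (\<lambda>x. Re (\<phi> x)) B) (FB B)"
    by (rule fE_lim[OF assms(2) continuous_on_Re[OF c] bR])
  have 2: "((\<lambda>x. Im (\<phi> x)) \<longlongrightarrow> f_E (\<lambda>x. Im (\<phi> x)) B) (FB B)"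
    by (rule fE_lim[OF assms(2) continuous_on_Im[OF c] bI])
  show ?thesis unfolding tendsto_complex_iff fstar_def using assms(2) 1 2 by simp
qed

lemma Cb_add: "\<phi> \<in> Cb \<Longrightarrow> \<eta> \<in> Cb \<Longrightarrow> (\<lambda>x. \<phi> x + \<eta> x) \<in> Cb"
proof -
  assume a: "\<phi> \<in> Cb" "\<eta> \<in> Cb"
  then obtain K1 K2 where K: "\<And>x. norm (\<phi> x) \<le> K1" "\<And>x. norm (\<eta> x) \<le> K2"
    and c: "continuous_on UNIV \<phi>" "continuous_on UNIV \<eta>" unfolding Cb_iff by blast
  have "norm (\<phi> x + \<eta> x) \<le> K1 + K2" for x using norm_triangle_le K by (metis add_mono)
  moreover have "continuous_on UNIV (\<lambda>x. \<phi> x + \<eta> x)" using c by (intro continuous_intros)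
  ultimately show ?thesis unfolding Cb_iff by blast
qed

lemma Cb_mult: "\<phi> \<in> Cb \<Longrightarrow> \<eta> \<in> Cb \<Longrightarrow> (\<lambda>x. \<phi> x * \<eta> x) \<in> Cb"
proof -
  assume a: "\<phi> \<in> Cb" "\<eta> \<in> Cb"
  then obtain K1 K2 where K: "\<And>x. norm (\<phi> x) \<le> K1" "\<And>x. norm (\<eta> x) \<le> K2"
    and c: "continuous_on UNIV \<phi>" "continuous_on UNIV \<eta>" unfolding Cb_iff by blast
  have "norm (\<phi> x * \<eta> x) \<le> K1 * K2" for x unfolding norm_mult
    using K order_trans[OF norm_ge_zero K(1)] by (intro mult_mono) auto
  moreover have "continuous_on UNIV (\<lambda>x. \<phi> x * \<eta> x)" using c by (intro continuous_intros)
  ultimately show ?thesis unfolding Cb_iff by blast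
qed

lemma Cb_scale: "\<phi> \<in> Cb \<Longrightarrow> (\<lambda>x. c * \<phi> x) \<in> Cb"
proof -
  assume a: "\<phi> \<in> Cb"
  have "(\<lambda>x. c) \<in> Cb" unfolding Cb_iff by (auto intro: continuous_intros)
  from Cb_mult[OF this a] show ?thesis .
qed

lemma Cb_cnj: "\<phi> \<in> Cb \<Longrightarrow> (\<lambda>x. cnj (\<phi> x)) \<in> Cb"
proof -
  assume a: "\<phi> \<in> Cb"
  then obtain K where K: "\<And>x. norm (\<phi> x) \<le> K"
    and c: "continuous_on UNIV \<phi>" unfolding Cb_iff by blast
  have "norm (cnj (\<phi> x)) \<le> K" for x using K by simp
  moreover have "continuous_on UNIV (\<lambda>x. cnj (\<phi> x))" using c by (intro continuous_intros)
  ultimately show ?thesis unfolding Cb_iff by blast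
qed

lemma fstar_nonqp: "\<not> quasipoint B \<Longrightarrow> fstar \<phi> B = 0"
  unfolding fstar_def by simp

lemma fstar_add: "\<phi> \<in> Cb \<Longrightarrow> \<eta> \<in> Cb \<Longrightarrow> fstar (\<lambda>x. \<phi> x + \<eta> x) = (\<lambda>B. fstar \<phi> B + fstar \<eta> B)"
proof
  fix B assume a: "\<phi> \<in> Cb" "\<eta> \<in> Cb"
  show "fstar (\<lambda>x. \<phi> x + \<eta> x) B = fstar \<phi> B + fstar \<eta> B"
  proof (cases "quasipoint B")
    case True
    show ?thesis by (rule lim_unique[OF True fstar_lim[OF Cb_add[OF a] True]
      tendsto_add[OF fstar_lim[OF a(1) True] fstar_lim[OF a(2) True]]])
  qed (simp add: fstar_nonqp)
qed

lemma fstar_mult: "\<phi> \<in> Cb \<Longrightarrow> \<eta> \<in> Cb \<Longrightarrow> fstar (\<lambda>x. \<phi> x * \<eta> x) = (\<lambda>B. fstar \<phi> B * fstar \<eta> B)"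
proof
  fix B assume a: "\<phi> \<in> Cb" "\<eta> \<in> Cb"
  show "fstar (\<lambda>x. \<phi> x * \<eta> x) B = fstar \<phi> B * fstar \<eta> B"
  proof (cases "quasipoint B")
    case True
    show ?thesis by (rule lim_unique[OF True fstar_lim[OF Cb_mult[OF a] True]
      tendsto_mult[OF fstar_lim[OF a(1) True] fstar_lim[OF a(2) True]]])
  qed (simp add: fstar_nonqp)
qed

lemma fstar_scale: "\<phi> \<in> Cb \<Longrightarrow> fstar (\<lambda>x. c * \<phi> x) = (\<lambda>B. c * fstar \<phi> B)"
proof
  fix B assume a: "\<phi> \<in> Cb"
  show "fstar (\<lambda>x. c * \<phi> x) B = c * fstar \<phi> B"
  proof (cases "quasipoint B")
    case True
    show ?thesis by (rule lim_unique[OF True fstar_lim[OF Cb_scale[OF a] True]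
      tendsto_mult[OF tendsto_const fstar_lim[OF a True]]])
  qed (simp add: fstar_nonqp)
qed

lemma fstar_cnj: "\<phi> \<in> Cb \<Longrightarrow> fstar (\<lambda>x. cnj (\<phi> x)) = (\<lambda>B. cnj (fstar \<phi> B))"
proof
  fix B assume a: "\<phi> \<in> Cb"
  show "fstar (\<lambda>x. cnj (\<phi> x)) B = cnj (fstar \<phi> B)"
  proof (cases "quasipoint B")
    case True
    show ?thesis by (rule lim_unique[OF True fstar_lim[OF Cb_cnj[OF a] True]
      tendsto_cnj[OF fstar_lim[OF a True]]])
  qed (simp add: fstar_nonqp)
qed


lemma over_nhds:
  assumes o: "over B x" and N: "open N" "x \<in> N"
  shows "N \<in> B"
proof (rule ccontr)
  assume "N \<notin> B"
  have q: "quasipoint B" using o unfolding over_def by blast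
  obtain V where V: "V \<in> B" "V \<inter> N = {}" using qp_max[OF q N(1) \<open>N \<notin> B\<close>] by blast
  have "x \<in> closure V" using o V(1) unfolding over_def by blast
  moreover have "N \<inter> closure V = {}" using open_Int_closure_eq_empty[OF N(1), of V] V(2) by blast
  ultimately show False using N(2) by blast
qed

lemma exists_over: "\<exists>B. over B (x::'a::topological_space)"
proof -
  define D where "D = {N::'a set. open N \<and> x \<in> N}"
  have "dual_ideal D"
  proof (rule di_intro)
    show "D \<noteq> {}" unfolding D_def by blast
    show "\<And>U. U \<in> D \<Longrightarrow> open U" unfolding D_def by blast
    show "{} \<notin> D" unfolding D_def by blast
    show "\<And>U V. U \<in> D \<Longrightarrow> open V \<Longrightarrow> U \<subseteq> V \<Longrightarrow> V \<in> D" unfolding D_def by blast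
    show "\<And>U V. U \<in> D \<Longrightarrow> V \<in> D \<Longrightarrow> U \<inter> V \<in> D" unfolding D_def by blast
  qed
  then obtain B where q: "quasipoint B" and DB: "D \<subseteq> B" using qp_ext by blast
  have d: "dual_ideal B" using q by (rule qp_di)
  have "x \<in> closure U" if U: "U \<in> B" for U
  proof (rule ccontr)
    assume nx: "x \<notin> closure U"
    have "- closure U \<in> D" unfolding D_def using nx by auto
    then have "- closure U \<in> B" using DB by blast
    then have "- closure U \<inter> U \<in> B" using di_Int[OF d _ U] by blast
    moreover have "- closure U \<inter> U = {}" using closure_subset by blast
    ultimately show False using di_empty[OF d] by simp
  qed
  then have "over B x" unfolding over_def using q by blast
  then show ?thesis by blast
qed

lemma fstar_over:
  assumes "\<phi> \<in> Cb" "over B x"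
  shows "fstar \<phi> B = \<phi> x"
proof -
  have q: "quasipoint B" using assms(2) unfolding over_def by blast
  have d: "dual_ideal B" using q by (rule qp_di)
  have c: "continuous_on UNIV \<phi>" using assms(1) unfolding Cb_iff by blast
  have "(\<phi> \<longlongrightarrow> \<phi> x) (FB B)"
  proof (rule topological_tendstoI)
    fix S assume S: "open S" "\<phi> x \<in> S"
    have "open (\<phi> -` S)" by (rule open_vimage[OF S(1) c])
    then have "\<phi> -` S \<in> B" using over_nhds[OF assms(2)] S(2) by blast
    then show "eventually (\<lambda>y. \<phi> y \<in> S) (FB B)" unfolding eventually_FB[OF d] by blast
  qed
  then show ?thesis using lim_unique[OF q fstar_lim[OF assms(1) q]] by blast
qed

lemma topspace_Q: "topspace Q_top = {B. quasipoint B}"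
proof -
  have "topspace Q_top = \<Union>{{\<B>. quasipoint \<B> \<and> U \<in> \<B>} | U. open U}"
    unfolding Q_top_def by simp
  also have "\<dots> = {B. quasipoint B}"
  proof
    show "\<Union>{{\<B>. quasipoint \<B> \<and> U \<in> \<B>} | U. open U} \<subseteq> {B. quasipoint B}" by blast
    show "{B. quasipoint B} \<subseteq> \<Union>{{\<B>. quasipoint \<B> \<and> U \<in> \<B>} | U. open U}"
    proof
      fix B assume "B \<in> {B. quasipoint B}"
      then have "quasipoint B" "UNIV \<in> B" using di_UNIV[OF qp_di] by auto
      then show "B \<in> \<Union>{{\<B>. quasipoint \<B> \<and> U \<in> \<B>} | U. open U}"
        using open_UNIV by blast
    qed
  qed
  finally show ?thesis .
qed

lemma QU_open: "open U \<Longrightarrow> openin Q_top {B. quasipoint B \<and> U \<in> B}"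
  unfolding Q_top_def by (rule topology_generated_by_Basis) blast

lemma gen_nbhd:
  assumes "generate_topology_on {{\<B>. quasipoint \<B> \<and> U \<in> \<B>} | U::'a::topological_space set. open U} S"
  shows "\<forall>C\<in>S. quasipoint C \<longrightarrow> (\<exists>U. open U \<and> U \<in> C \<and> {D. quasipoint D \<and> U \<in> D} \<subseteq> S)"
  using assms
proof (induction rule: generate_topology_on.induct)
  case Empty
  then show ?case by blast
next
  case (Int a b)
  show ?case
  proof (intro ballI impI)
    fix C assume C: "C \<in> a \<inter> b" "quasipoint C"
    obtain U1 where U1: "open U1" "U1 \<in> C" "{D. quasipoint D \<and> U1 \<in> D} \<subseteq> a" using Int.IH(1) C by blast
    obtain U2 where U2: "open U2" "U2 \<in> C" "{D. quasipoint D \<and> U2 \<in> D} \<subseteq> b" using Int.IH(2) C by blast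
    have "U1 \<inter> U2 \<in> C" using di_Int[OF qp_di[OF C(2)] U1(2) U2(2)] .
    moreover have "{D. quasipoint D \<and> U1 \<inter> U2 \<in> D} \<subseteq> a \<inter> b"
    proof
      fix D assume "D \<in> {D. quasipoint D \<and> U1 \<inter> U2 \<in> D}"
      then have D: "quasipoint D" "U1 \<inter> U2 \<in> D" by auto
      have "U1 \<in> D" using di_up[OF qp_di[OF D(1)] D(2) U1(1)] by blast
      moreover have "U2 \<in> D" using di_up[OF qp_di[OF D(1)] D(2) U2(1)] by blast
      ultimately show "D \<in> a \<inter> b" using U1(3) U2(3) D(1) by blast
    qed
    ultimately show "\<exists>U. open U \<and> U \<in> C \<and> {D. quasipoint D \<and> U \<in> D} \<subseteq> a \<inter> b"
      using U1(1) U2(1) by blast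
  qed
next
  case (UN K)
  show ?case
  proof (intro ballI impI)
    fix C assume C: "C \<in> \<Union>K" "quasipoint C"
    then obtain k where k: "k \<in> K" "C \<in> k" by blast
    then obtain U where "open U" "U \<in> C" "{D. quasipoint D \<and> U \<in> D} \<subseteq> k" using UN.IH C(2) by blast
    then show "\<exists>U. open U \<and> U \<in> C \<and> {D. quasipoint D \<and> U \<in> D} \<subseteq> \<Union>K" using k by blast
  qed
next
  case (Basis s)
  then show ?case by blast
qed

lemma cont_nbhd:
  assumes c: "continuous_map Q_top euclidean \<psi>" and q: "quasipoint C" and e: "e > 0"
  shows "\<exists>U. open U \<and> U \<in> C \<and> (\<forall>D. quasipoint D \<and> U \<in> D \<longrightarrow> dist (\<psi> D) (\<psi> C) < e)"
proof -
  have "openin euclidean (ball (\<psi> C) e)" by simp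
  then have "openin Q_top {x \<in> topspace Q_top. \<psi> x \<in> ball (\<psi> C) e}"
    using c unfolding continuous_map_def by blast
  then have g: "generate_topology_on {{\<B>. quasipoint \<B> \<and> U \<in> \<B>} | U. open U} {x \<in> topspace Q_top. \<psi> x \<in> ball (\<psi> C) e}"
    unfolding Q_top_def by (rule openin_topology_generated_by)
  have "C \<in> {x \<in> topspace Q_top. \<psi> x \<in> ball (\<psi> C) e}" using q e by (simp add: topspace_Q)
  then obtain U where "open U" "U \<in> C" "{D. quasipoint D \<and> U \<in> D} \<subseteq> {x \<in> topspace Q_top. \<psi> x \<in> ball (\<psi> C) e}"
    using gen_nbhd[OF g] q by blast
  then show ?thesis by (auto simp: dist_commute)
qed

lemma fstar_cont:
  assumes "\<phi> \<in> Cb"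
  shows "continuous_map Q_top euclidean (fstar \<phi>)"
  unfolding continuous_map_def
proof (intro conjI allI impI)
  show "fstar \<phi> \<in> topspace Q_top \<rightarrow> topspace euclidean" by simp
  fix T :: "complex set" assume "openin euclidean T"
  then have T: "open T" by simp
  show "openin Q_top {x \<in> topspace Q_top. fstar \<phi> x \<in> T}"
  proof (subst openin_subopen, intro ballI)
    fix B assume B: "B \<in> {x \<in> topspace Q_top. fstar \<phi> x \<in> T}"
    then have q: "quasipoint B" and fT: "fstar \<phi> B \<in> T" using topspace_Q by auto
    obtain e where e: "e > 0" "ball (fstar \<phi> B) e \<subseteq> T" using open_contains_ball_eq[OF T] fT by blast
    have h: "e/2 > 0" using e(1) by simp
    have "eventually (\<lambda>y. dist (\<phi> y) (fstar \<phi> B) < e/2) (FB B)"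
      using tendsto_iff[THEN iffD1, OF fstar_lim[OF assms q], rule_format, OF h] .
    then obtain U where U: "U \<in> B" "\<forall>y\<in>U. dist (\<phi> y) (fstar \<phi> B) < e/2"
      unfolding eventually_FB[OF qp_di[OF q]] by blast
    have Uo: "open U" using di_open[OF qp_di[OF q] U(1)] .
    have "{D. quasipoint D \<and> U \<in> D} \<subseteq> {x \<in> topspace Q_top. fstar \<phi> x \<in> T}"
    proof
      fix D assume "D \<in> {D. quasipoint D \<and> U \<in> D}"
      then have D: "quasipoint D" "U \<in> D" by auto
      have "eventually (\<lambda>y. \<phi> y \<in> cball (fstar \<phi> B) (e/2)) (FB D)"
        unfolding eventually_FB[OF qp_di[OF D(1)]] using D(2) U(2)
        by (auto simp: dist_commute intro!: bexI[of _ U] less_imp_le)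
      then have "fstar \<phi> D \<in> cball (fstar \<phi> B) (e/2)"
        using Lim_in_closed_set[OF closed_cball _ FB_nonbot[OF qp_di[OF D(1)]] fstar_lim[OF assms D(1)]]
        by blast
      then have "fstar \<phi> D \<in> ball (fstar \<phi> B) e" using e(1) by simp
      then show "D \<in> {x \<in> topspace Q_top. fstar \<phi> x \<in> T}" using e(2) D(1) topspace_Q by auto
    qed
    then show "\<exists>T'. openin Q_top T' \<and> B \<in> T' \<and> T' \<subseteq> {x \<in> topspace Q_top. fstar \<phi> x \<in> T}"
      using QU_open[OF Uo] q U(1) by blast
  qed
qed

lemma fstar_Cpt: "\<phi> \<in> Cb \<Longrightarrow> fstar \<phi> \<in> Cpt"
  unfolding Cpt_def using fstar_cont fstar_nonqp fstar_over by fastforce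


lemma qp_compl:
  assumes q: "quasipoint C" and U: "open U" "U \<notin> C"
  shows "interior (- U) \<in> C"
proof -
  obtain V where V: "V \<in> C" "V \<inter> U = {}" using qp_max[OF q U] by blast
  have Vo: "open V" using di_open[OF qp_di[OF q] V(1)] .
  have "V \<subseteq> interior (- U)" using V(2) Vo by (intro interior_maximal) auto
  then show ?thesis using di_up[OF qp_di[OF q] V(1) open_interior] by blast
qed

lemma di_finite_Inter:
  assumes d: "dual_ideal C" and F: "finite F"
  shows "(\<forall>U\<in>F. g U \<in> C) \<longrightarrow> (\<Inter>U\<in>F. g U) \<in> C"
  using F
proof (induction F rule: finite_induct)
  case empty
  then show ?case using di_UNIV[OF d] by simp
next
  case (insert x F)
  show ?case
  proof
    assume a: "\<forall>U\<in>insert x F. g U \<in> C"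
    then have "(\<Inter>U\<in>F. g U) \<in> C" "g x \<in> C" using insert.IH by auto
    then have "g x \<inter> (\<Inter>U\<in>F. g U) \<in> C" using di_Int[OF d] by blast
    then show "(\<Inter>U\<in>insert x F. g U) \<in> C" by simp
  qed
qed

definition Gint :: "'a::topological_space set set \<Rightarrow> 'a set" where
  "Gint F = (\<Inter>U\<in>F. interior (- U))"

lemma Gint_empty: "Gint {} = UNIV" unfolding Gint_def by simp
lemma Gint_Un: "Gint (F1 \<union> F2) = Gint F1 \<inter> Gint F2" unfolding Gint_def by (rule INT_Un)
lemma Gint_single: "Gint {U} = interior (- U)" unfolding Gint_def by simp

lemma qp_cover_finite:
  fixes \<U> :: "'a::topological_space set set"
  assumes o: "\<forall>U\<in>\<U>. open U" and cov: "\<forall>C. quasipoint C \<longrightarrow> (\<exists>U\<in>\<U>. U \<in> C)"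
  shows "\<exists>F\<subseteq>\<U>. finite F \<and> (\<forall>C. quasipoint C \<longrightarrow> (\<exists>U\<in>F. U \<in> C))"
proof (rule ccontr)
  assume nc: "\<not> ?thesis"
  define D where "D = {X::'a set. open X \<and> (\<exists>F. F \<subseteq> \<U> \<and> finite F \<and> Gint F \<subseteq> X)}"
  have Dmem: "X \<in> D \<longleftrightarrow> open X \<and> (\<exists>F. F \<subseteq> \<U> \<and> finite F \<and> Gint F \<subseteq> X)" for X
    unfolding D_def by (rule mem_Collect_eq)
  have "dual_ideal D"
  proof (rule di_intro)
    have "open (UNIV::'a set) \<and> {} \<subseteq> \<U> \<and> finite {} \<and> Gint {} \<subseteq> (UNIV::'a set)" by simp
    then have "UNIV \<in> D" unfolding Dmem by blast
    then show "D \<noteq> {}" by blast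
    show "\<And>U. U \<in> D \<Longrightarrow> open U" unfolding Dmem by blast
    show "{} \<notin> D"
    proof
      assume "{} \<in> D"
      then obtain F where F: "F \<subseteq> \<U>" "finite F" "Gint F \<subseteq> {}" unfolding Dmem by blast
      have "\<not> (\<forall>C. quasipoint C \<longrightarrow> (\<exists>U\<in>F. U \<in> C))"
      proof
        assume h: "\<forall>C. quasipoint C \<longrightarrow> (\<exists>U\<in>F. U \<in> C)"
        have "\<exists>F\<subseteq>\<U>. finite F \<and> (\<forall>C. quasipoint C \<longrightarrow> (\<exists>U\<in>F. U \<in> C))"
          by (rule exI[of _ F]) (use F(1,2) h in simp)
        from nc this show False by (rule notE)
      qed
      then obtain C where C: "quasipoint C" "\<forall>U\<in>F. U \<notin> C" by blast
      have all: "\<forall>U\<in>F. interior (- U) \<in> C"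
      proof
        fix U assume "U \<in> F"
        then have "open U" "U \<notin> C" using C(2) F(1) o by auto
        then show "interior (- U) \<in> C" by (rule qp_compl[OF C(1)])
      qed
      have X: "Gint F \<in> C" unfolding Gint_def
        using di_finite_Inter[OF qp_di[OF C(1)] F(2), of "\<lambda>U. interior (- U)"] all by (rule mp)
      have Y: "Gint F = {}" using F(3) by auto
      have "{} \<in> C" using X unfolding Y .
      then show False using di_empty[OF qp_di[OF C(1)]] by contradiction
    qed
    show "\<And>U V. U \<in> D \<Longrightarrow> open V \<Longrightarrow> U \<subseteq> V \<Longrightarrow> V \<in> D"
    proof -
      fix U V assume a: "U \<in> D" "open V" "U \<subseteq> V"
      from a(1) have "\<exists>F. F \<subseteq> \<U> \<and> finite F \<and> Gint F \<subseteq> U" unfolding Dmem by (rule conjunct2)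
      then obtain F where F: "F \<subseteq> \<U>" "finite F" "Gint F \<subseteq> U" by (elim exE conjE)
      have "Gint F \<subseteq> V" using F(3) a(3) by (rule order_trans)
      with F(1,2) have "\<exists>F. F \<subseteq> \<U> \<and> finite F \<and> Gint F \<subseteq> V" by (intro exI[of _ F] conjI)
      with a(2) show "V \<in> D" unfolding Dmem by (intro conjI)
    qed
    fix U V assume UV: "U \<in> D" "V \<in> D"
    obtain F1 where F1: "F1 \<subseteq> \<U>" "finite F1" "Gint F1 \<subseteq> U" "open U"
      using UV(1) unfolding Dmem by blast
    obtain F2 where F2: "F2 \<subseteq> \<U>" "finite F2" "Gint F2 \<subseteq> V" "open V"
      using UV(2) unfolding Dmem by blast
    have "Gint (F1 \<union> F2) \<subseteq> U \<inter> V" unfolding Gint_Un using F1(3) F2(3) by (rule Int_mono)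
    moreover have "F1 \<union> F2 \<subseteq> \<U>" "finite (F1 \<union> F2)" using F1(1,2) F2(1,2) by auto
    moreover have "open (U \<inter> V)" using F1(4) F2(4) by (rule open_Int)
    ultimately have "open (U \<inter> V) \<and> F1 \<union> F2 \<subseteq> \<U> \<and> finite (F1 \<union> F2) \<and> Gint (F1 \<union> F2) \<subseteq> U \<inter> V"
      by blast
    then show "U \<inter> V \<in> D" unfolding Dmem by blast
  qed
  then obtain C where C: "quasipoint C" "D \<subseteq> C" using qp_ext by blast
  obtain U where U: "U \<in> \<U>" "U \<in> C" using cov C(1) by blast
  have "open (interior (- U)) \<and> {U} \<subseteq> \<U> \<and> finite {U} \<and> Gint {U} \<subseteq> interior (- U)"
    using U(1) by (simp add: Gint_single)
  then have "interior (- U) \<in> D" unfolding Dmem by blast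
  then have "interior (- U) \<in> C" using C(2) by blast
  then have "U \<inter> interior (- U) \<in> C" using di_Int[OF qp_di[OF C(1)] U(2)] by blast
  moreover have "U \<inter> interior (- U) = {}" using interior_subset by blast
  ultimately show False using di_empty[OF qp_di[OF C(1)]] by simp
qed


definition pq :: "'a::topological_space \<Rightarrow> 'a set set" where
  "pq x = (SOME B. over B x)"

lemma pq_over: "over (pq x) x"
  unfolding pq_def using exists_over[of x] by (rule someI_ex)

lemma pq_qp: "quasipoint (pq x)"
  using pq_over[of x] unfolding over_def by (rule conjunct1)

lemma surj_part:
  fixes \<psi> :: "'a::topological_space set set \<Rightarrow> complex"
  assumes "\<psi> \<in> Cpt"
  shows "\<exists>\<phi>\<in>Cb. fstar \<phi> = \<psi>"
proof -
  have z: "\<And>B. \<not> quasipoint B \<Longrightarrow> \<psi> B = 0" and c: "continuous_map Q_top euclidean \<psi>"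
    and fib: "\<And>x B1 B2. over B1 x \<Longrightarrow> over B2 x \<Longrightarrow> \<psi> B1 = \<psi> B2"
    using assms unfolding Cpt_def by blast+
  define \<phi> where "\<phi> x = \<psi> (pq x)" for x
  have fibval: "\<psi> B = \<phi> x" if "over B x" for B x
    unfolding \<phi>_def using fib[OF that pq_over] .
  define \<U> where "\<U> = {U::'a set. open U \<and> bounded (\<psi> ` {D. quasipoint D \<and> U \<in> D})}"
  have cov: "\<forall>C. quasipoint C \<longrightarrow> (\<exists>U\<in>\<U>. U \<in> C)"
  proof (intro allI impI)
    fix C :: "'a set set" assume q: "quasipoint C"
    obtain U where U: "open U" "U \<in> C" "\<forall>D. quasipoint D \<and> U \<in> D \<longrightarrow> dist (\<psi> D) (\<psi> C) < 1"
      using cont_nbhd[OF c q, of 1] by auto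
    have "\<psi> ` {D. quasipoint D \<and> U \<in> D} \<subseteq> ball (\<psi> C) 1"
      using U(3) by (auto simp: dist_commute)
    then have "bounded (\<psi> ` {D. quasipoint D \<and> U \<in> D})" by (rule bounded_subset[OF bounded_ball])
    then have "U \<in> \<U>" unfolding \<U>_def using U(1) by blast
    then show "\<exists>U\<in>\<U>. U \<in> C" using U(2) by blast
  qed
  have o: "\<forall>U\<in>\<U>. open U" unfolding \<U>_def by blast
  obtain F where F: "F \<subseteq> \<U>" "finite F" "\<forall>C. quasipoint C \<longrightarrow> (\<exists>U\<in>F. U \<in> C)"
    using qp_cover_finite[OF o cov] by blast
  have "range \<phi> \<subseteq> (\<Union>U\<in>F. \<psi> ` {D. quasipoint D \<and> U \<in> D})"
  proof
    fix z assume "z \<in> range \<phi>"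
    then obtain x where x: "z = \<phi> x" by blast
    obtain U where U: "U \<in> F" "U \<in> pq x" using F(3) pq_qp by blast
    have "z \<in> \<psi> ` {D. quasipoint D \<and> U \<in> D}" unfolding x \<phi>_def using U(2) pq_qp by blast
    then show "z \<in> (\<Union>U\<in>F. \<psi> ` {D. quasipoint D \<and> U \<in> D})" using U(1) by blast
  qed
  moreover have "bounded (\<Union>U\<in>F. \<psi> ` {D. quasipoint D \<and> U \<in> D})"
  proof (rule bounded_UN[OF F(2)])
    show "\<forall>U\<in>F. bounded (\<psi> ` {D. quasipoint D \<and> U \<in> D})" using F(1) unfolding \<U>_def by blast
  qed
  ultimately have bd: "bounded (range \<phi>)" by (rule bounded_subset[rotated])
  have ct: "(\<phi> \<longlongrightarrow> \<phi> x) (nhds x)" for x :: 'a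
    unfolding tendsto_iff
  proof (intro allI impI)
    fix e :: real assume e: "e > 0"
    define \<V> where "\<V> = {U::'a set. open U \<and> ((\<forall>D. quasipoint D \<and> U \<in> D \<longrightarrow> dist (\<psi> D) (\<phi> x) < e) \<or> x \<notin> closure U)}"
    have covV: "\<forall>C. quasipoint C \<longrightarrow> (\<exists>U\<in>\<V>. U \<in> C)"
    proof (intro allI impI)
      fix C :: "'a set set" assume q: "quasipoint C"
      show "\<exists>U\<in>\<V>. U \<in> C"
      proof (cases "over C x")
        case True
        then have "\<psi> C = \<phi> x" by (rule fibval)
        obtain U where U: "open U" "U \<in> C" "\<forall>D. quasipoint D \<and> U \<in> D \<longrightarrow> dist (\<psi> D) (\<psi> C) < e"
          using cont_nbhd[OF c q e] by blast
        then have "U \<in> \<V>" unfolding \<V>_def using \<open>\<psi> C = \<phi> x\<close> by simp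
        then show ?thesis using U(2) by blast
      next
        case False
        then obtain U where U: "U \<in> C" "x \<notin> closure U" using q unfolding over_def by blast
        have "open U" using di_open[OF qp_di[OF q] U(1)] .
        then have "U \<in> \<V>" unfolding \<V>_def using U(2) by simp
        then show ?thesis using U(1) by blast
      qed
    qed
    have oV: "\<forall>U\<in>\<V>. open U" unfolding \<V>_def by blast
    obtain G where G: "G \<subseteq> \<V>" "finite G" "\<forall>C. quasipoint C \<longrightarrow> (\<exists>U\<in>G. U \<in> C)"
      using qp_cover_finite[OF oV covV] by blast
    define G2 where "G2 = {U \<in> G. x \<notin> closure U}"
    define N where "N = \<Inter> ((\<lambda>U. - closure U) ` G2)"
    have fG2: "finite G2" unfolding G2_def using G(2) by simp
    have No: "open N" unfolding N_def
      by (rule open_Inter) (use fG2 in auto)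
    have xN: "x \<in> N" unfolding N_def G2_def by blast
    have "\<forall>y\<in>N. dist (\<phi> y) (\<phi> x) < e"
    proof
      fix y :: 'a assume y: "y \<in> N"
      obtain U where U: "U \<in> G" "U \<in> pq y" using G(3) pq_qp by blast
      show "dist (\<phi> y) (\<phi> x) < e"
      proof (cases "x \<in> closure U")
        case False
        then have "U \<in> G2" unfolding G2_def using U(1) by blast
        then have NU: "N \<subseteq> - closure U" unfolding N_def by blast
        have "N \<in> pq y" using over_nhds[OF pq_over No y] .
        then have "N \<inter> U \<in> pq y" using di_Int[OF qp_di[OF pq_qp] _ U(2)] by blast
        moreover have "N \<inter> U = {}" using NU closure_subset by blast
        ultimately show ?thesis using di_empty[OF qp_di[OF pq_qp[of y]]] by simp
      next
        case True
        have "U \<in> \<V>" using U(1) G(1) by blast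
        then have "\<forall>D. quasipoint D \<and> U \<in> D \<longrightarrow> dist (\<psi> D) (\<phi> x) < e"
          unfolding \<V>_def using True by blast
        then have "dist (\<psi> (pq y)) (\<phi> x) < e" using pq_qp U(2) by blast
        then show ?thesis unfolding \<phi>_def .
      qed
    qed
    then show "eventually (\<lambda>y. dist (\<phi> y) (\<phi> x) < e) (nhds x)"
      unfolding eventually_nhds using No xN by blast
  qed
  have "continuous_on UNIV \<phi>" unfolding continuous_on_def
    using ct tendsto_mono[OF at_within_le_nhds] by blast
  with bd have Cbphi: "\<phi> \<in> Cb" unfolding Cb_def by blast
  have "fstar \<phi> B = \<psi> B" for B :: "'a set set"
  proof (cases "quasipoint B")
    case False
    then show ?thesis using fstar_nonqp z by simp
  next
    case q: True
    have "(\<phi> \<longlongrightarrow> \<psi> B) (FB B)"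
      unfolding tendsto_iff
    proof (intro allI impI)
      fix e :: real assume e: "e > 0"
      obtain U where U: "open U" "U \<in> B" "\<forall>D. quasipoint D \<and> U \<in> D \<longrightarrow> dist (\<psi> D) (\<psi> B) < e"
        using cont_nbhd[OF c q e] by blast
      have "\<forall>y\<in>U. dist (\<phi> y) (\<psi> B) < e"
      proof
        fix y assume "y \<in> U"
        then have "U \<in> pq y" using over_nhds[OF pq_over U(1)] by blast
        then show "dist (\<phi> y) (\<psi> B) < e" unfolding \<phi>_def using U(3) pq_qp by blast
      qed
      then show "eventually (\<lambda>y. dist (\<phi> y) (\<psi> B) < e) (FB B)"
        unfolding eventually_FB[OF qp_di[OF q]] using U(2) by blast
    qed
    then show ?thesis using lim_unique[OF q fstar_lim[OF Cbphi q]] by blast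
  qed
  then show ?thesis using Cbphi by blast
qed

theorem theorem2p45:
  shows "bij_betw (fstar :: (('a::t2_space) \<Rightarrow> complex) \<Rightarrow> _) Cb Cpt \<and>
    (\<forall>\<phi>\<in>(Cb :: ('a::t2_space \<Rightarrow> complex) set). \<forall>\<eta>\<in>(Cb :: ('a::t2_space \<Rightarrow> complex) set).
       fstar (\<lambda>x. \<phi> x + \<eta> x) = (\<lambda>\<B>. fstar \<phi> \<B> + fstar \<eta> \<B>) \<and>
       fstar (\<lambda>x. \<phi> x * \<eta> x) = (\<lambda>\<B>. fstar \<phi> \<B> * fstar \<eta> \<B>)) \<and>
    (\<forall>\<phi>\<in>(Cb :: ('a::t2_space \<Rightarrow> complex) set). \<forall>c::complex. fstar (\<lambda>x. c * \<phi> x) = (\<lambda>\<B>. c * fstar \<phi> \<B>)) \<and>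
    (\<forall>\<phi>\<in>(Cb :: ('a::t2_space \<Rightarrow> complex) set). fstar (\<lambda>x. cnj (\<phi> x)) = (\<lambda>\<B>. cnj (fstar \<phi> \<B>)))"
proof (intro conjI ballI allI)
  show "bij_betw (fstar :: (('a::t2_space) \<Rightarrow> complex) \<Rightarrow> _) Cb Cpt"
    unfolding bij_betw_def
  proof (intro conjI)
    show "inj_on (fstar :: (('a::t2_space) \<Rightarrow> complex) \<Rightarrow> _) Cb"
    proof (rule inj_onI)
      fix \<phi> \<eta> :: "'a \<Rightarrow> complex" assume a: "\<phi> \<in> Cb" "\<eta> \<in> Cb" "fstar \<phi> = fstar \<eta>"
      show "\<phi> = \<eta>"
      proof
        fix x :: 'a
        obtain B where B: "over B x" using exists_over by blast
        have "\<phi> x = fstar \<phi> B" using fstar_over[OF a(1) B] by simp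
        also have "\<dots> = fstar \<eta> B" using a(3) by simp
        also have "\<dots> = \<eta> x" using fstar_over[OF a(2) B] .
        finally show "\<phi> x = \<eta> x" .
      qed
    qed
    show "fstar ` (Cb :: ('a \<Rightarrow> complex) set) = Cpt"
    proof
      show "fstar ` (Cb :: ('a \<Rightarrow> complex) set) \<subseteq> Cpt" using fstar_Cpt by blast
      show "Cpt \<subseteq> fstar ` (Cb :: ('a \<Rightarrow> complex) set)"
      proof
        fix \<psi> :: "'a set set \<Rightarrow> complex" assume "\<psi> \<in> Cpt"
        then obtain \<phi> where "\<phi> \<in> Cb" "fstar \<phi> = \<psi>" using surj_part by blast
        then show "\<psi> \<in> fstar ` Cb" by blast
      qed
    qed
  qed
qed (auto simp: fstar_add fstar_mult fstar_scale fstar_cnj)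

end
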